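(* Every derivable sequent $\Gamma\vdash A$ of the sequent calculus has exactly one focused derivation.
   Context: Formulas are built from atoms ($p,q,\dots$) by a binary product: every formula is an atom or $A\bullet B$. A context is a finite (possibly empty) list of formulas; commas denote concatenation. The sequent calculus has exactly four rules (no weakening, contraction or exchange): ($\bullet L$) from $A,B,\Delta\vdash C$ infer $A\bullet B,\Delta\vdash C$ (the product must be the leftmost formula); ($\bullet R$) from $\Gamma\vdash A$ and $\Delta\vdash B$ infer $\Gamma,\Delta\vdash A\bullet B$; ($id$) $A\vdash A$; ($cut$) from $\Theta\vdash A$ and $\Gamma,A,\Delta\vdash B$ infer $\Gamma,\Theta,\Delta\vdash B$. A derivation is a finite rooted tree whose nodes are labelled by rule instances and whose edges are labelled by sequents; a sequent is derivable if it is the conclusion of a derivation with no undischarged premises. A context is irreducible if its leftmost formula is not a product (it is empty or begins with an atom). A focused derivation is a derivation (with no undischarged premises) using only: ($\bullet L$); ($\bullet R^{foc}$): from $\Gamma\vdash A$ and $\Delta\vdash B$ infer $\Gamma,\Delta\vdash A\bullet B$, where $\Gamma$ is irreducible; and ($id^{atm}$): $p\vdash p$ for atoms $p$. *)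

theory Defs
  imports Main
begin

datatype 'a fma = At 'a | Prod "'a fma" "'a fma"

inductive derivable :: "'a fma list \<Rightarrow> 'a fma \<Rightarrow> bool" where
  id: "derivable [A] A"
| prodL: "derivable (A # B # \<Delta>) C \<Longrightarrow> derivable (Prod A B # \<Delta>) C"
| prodR: "derivable \<Gamma> A \<Longrightarrow> derivable \<Delta> B \<Longrightarrow> derivable (\<Gamma> @ \<Delta>) (Prod A B)"
| cut: "derivable \<Theta> A \<Longrightarrow> derivable (\<Gamma> @ A # \<Delta>) B \<Longrightarrow> derivable (\<Gamma> @ \<Theta> @ \<Delta>) B"

fun irreducible :: "'a fma list \<Rightarrow> bool" where
  "irreducible [] = True"
| "irreducible (At p # _) = True"
| "irreducible (Prod _ _ # _) = False"

datatype 'a fder =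
    IdAtm 'a
  | ProdL "'a fma" "'a fma" "'a fma list" "'a fma" "'a fder"
  | ProdRfoc "'a fma list" "'a fma list" "'a fma" "'a fma" "'a fder" "'a fder"

fun fconcl :: "'a fder \<Rightarrow> 'a fma list \<times> 'a fma" where
  "fconcl (IdAtm p) = ([At p], At p)"
| "fconcl (ProdL A B \<Delta> C d) = (Prod A B # \<Delta>, C)"
| "fconcl (ProdRfoc \<Gamma> \<Delta> A B d1 d2) = (\<Gamma> @ \<Delta>, Prod A B)"

fun fwf :: "'a fder \<Rightarrow> bool" where
  "fwf (IdAtm p) = True"
| "fwf (ProdL A B \<Delta> C d) = (fwf d \<and> fconcl d = (A # B # \<Delta>, C))"
| "fwf (ProdRfoc \<Gamma> \<Delta> A B d1 d2) =
     (irreducible \<Gamma> \<and> fwf d1 \<and> fwf d2 \<and> fconcl d1 = (\<Gamma>, A) \<and> fconcl d2 = (\<Delta>, B))"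

definition focused_derivation_of :: "'a fder \<Rightarrow> 'a fma list \<Rightarrow> 'a fma \<Rightarrow> bool" where
  "focused_derivation_of d \<Gamma> A \<longleftrightarrow> fwf d \<and> fconcl d = (\<Gamma>, A)"

end

theory Submission
  imports Defs
begin

fun yield :: "'a fma \<Rightarrow> 'a list" where
  "yield (At p) = [p]"
| "yield (Prod A B) = yield A @ yield B"

definition yields :: "'a fma list \<Rightarrow> 'a list" where
  "yields G = concat (map yield G)"

lemma yield_ne: "yield A \<noteq> []"
  by (induction A) auto

lemma wf_yields: "fwf d \<Longrightarrow> yields (fst (fconcl d)) = yield (snd (fconcl d))"
  by (induction d) (auto simp: yields_def)

lemma split_unique:
  "xs @ ys = xs' @ ys' \<Longrightarrow> length (yields xs) = length (yields xs') \<Longrightarrow> xs = xs'"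
proof (induction xs arbitrary: xs')
  case Nil
  then show ?case
    by (cases xs') (auto simp: yields_def yield_ne)
next
  case (Cons x xs)
  then show ?case
    by (cases xs') (auto simp: yields_def yield_ne)
qed

lemma ctx_ne: "fwf d \<Longrightarrow> fst (fconcl d) \<noteq> []"
proof
  assume "fwf d" "fst (fconcl d) = []"
  then have "yield (snd (fconcl d)) = []" using wf_yields[of d] by (simp add: yields_def)
  then show False using yield_ne by blast
qed

lemma uniq: "fwf d1 \<Longrightarrow> fwf d2 \<Longrightarrow> fconcl d1 = fconcl d2 \<Longrightarrow> d1 = d2"
proof (induction d1 arbitrary: d2)
  case (IdAtm p)
  then show ?case by (cases d2) auto
next
  case (ProdL A B D C d)
  then show ?case
  proof (cases d2)
    case (ProdRfoc G2 D2 A2 B2 f1 f2)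
    with ProdL have "G2 \<noteq> []" using ctx_ne[of f1] by auto
    with ProdL ProdRfoc show ?thesis by (cases G2) auto
  qed auto
next
  case (ProdRfoc G1 D1 A B e1 e2)
  have g1: "G1 \<noteq> []" using ctx_ne[of e1] ProdRfoc.prems by auto
  show ?case
  proof (cases d2)
    case (IdAtm x)
    then show ?thesis using ProdRfoc.prems by auto
  next
    case (ProdL x y z w v)
    then show ?thesis using ProdRfoc.prems g1 by (cases G1) auto
  next
    case (ProdRfoc G2 D2 A2 B2 f1 f2)
    note P = ProdRfoc.prems[unfolded ProdRfoc]
    have e: "G1 @ D1 = G2 @ D2" and ab: "A2 = A" "B2 = B" using P by auto
    have "yields G1 = yield A" using wf_yields[of e1] P by auto
    moreover have "yields G2 = yield A" using wf_yields[of f1] P ab by auto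
    ultimately have "G1 = G2" using split_unique[OF e] by simp
    with e have "D1 = D2" by simp
    have "e1 = f1" using ProdRfoc.IH(1)[of f1] P ab \<open>G1 = G2\<close> by auto
    moreover have "e2 = f2" using ProdRfoc.IH(2)[of f2] P ab \<open>D1 = D2\<close> by auto
    ultimately show ?thesis using ProdRfoc \<open>G1 = G2\<close> \<open>D1 = D2\<close> ab by simp
  qed
qed

inductive foc :: "'a fma list \<Rightarrow> 'a fma \<Rightarrow> bool" where
  fatm: "foc [At p] (At p)"
| fL: "foc (A # B # D) C \<Longrightarrow> foc (Prod A B # D) C"
| fR: "irreducible G \<Longrightarrow> foc G A \<Longrightarrow> foc D B \<Longrightarrow> foc (G @ D) (Prod A B)"

lemma foc_ex: "foc G A \<Longrightarrow> \<exists>d. fwf d \<and> fconcl d = (G, A)"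
proof (induction rule: foc.induct)
  case (fatm p)
  then show ?case by (intro exI[of _ "IdAtm p"]) auto
next
  case (fL A B D C)
  then obtain d where "fwf d \<and> fconcl d = (A # B # D, C)" by blast
  then show ?case by (intro exI[of _ "ProdL A B D C d"]) auto
next
  case (fR G A D B)
  then obtain d1 d2 where "fwf d1 \<and> fconcl d1 = (G, A)" "fwf d2 \<and> fconcl d2 = (D, B)" by blast
  then show ?case using fR by (intro exI[of _ "ProdRfoc G D A B d1 d2"]) auto
qed

lemma foc_ne: "foc G A \<Longrightarrow> G \<noteq> []"
  by (induction rule: foc.induct) auto

lemma fR_adm: "foc G A \<Longrightarrow> foc D B \<Longrightarrow> foc (G @ D) (Prod A B)"
proof (induction G A arbitrary: D rule: foc.induct)
  case (fatm p)
  then show ?case using foc.fR[of "[At p]"] foc.fatm by fastforce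
next
  case (fL A B D' C)
  then show ?case using foc.fL by fastforce
next
  case (fR G A D' B')
  have "G \<noteq> []" using foc_ne fR.hyps(2) by blast
  then have "irreducible (G @ D')" using fR.hyps(1) by (cases G rule: irreducible.cases) auto
  moreover have "foc (G @ D') (Prod A B')" using foc.fR[OF fR.hyps(1,2,3)] .
  ultimately show ?case using foc.fR[OF _ _ fR.prems] by fastforce
qed

lemma foc_id: "foc [A] A"
proof (induction A)
  case (At x)
  then show ?case by (rule fatm)
next
  case (Prod A1 A2)
  then show ?case using fR_adm[of "[A1]" A1 "[A2]" A2] fL by fastforce
qed

lemma cut_gen:
  assumes princ: "\<And>C1 C2 D B. A = Prod C1 C2 \<Longrightarrow> foc (C1 # C2 # D) B \<Longrightarrow> foc (T @ D) B"
    and ft: "foc T A"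
  shows "foc X B \<Longrightarrow> X = G @ A # D \<Longrightarrow> foc (G @ T @ D) B"
proof (induction X B arbitrary: G D rule: foc.induct)
  case (fatm p)
  then show ?case using ft by (cases G) auto
next
  case (fL A' B' D' C)
  show ?case
  proof (cases G)
    case Nil
    then show ?thesis using fL princ by auto
  next
    case (Cons g G')
    then have "g = Prod A' B'" "D' = G' @ A # D" using fL.prems by auto
    then show ?thesis using fL.IH[of "A' # B' # G'" D] Cons foc.fL by auto
  qed
next
  case (fR G1 A' D1 B')
  from fR.prems have "G1 @ D1 = G @ (A # D)" by simp
  then obtain us where "(G1 = G @ us \<and> us @ D1 = A # D) \<or> (G1 @ us = G \<and> D1 = us @ A # D)"
    unfolding append_eq_append_conv2 by blast
  then show ?case
  proof
    assume h: "G1 = G @ us \<and> us @ D1 = A # D"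
    show ?thesis
    proof (cases us)
      case Nil
      then have "G1 = G" "D1 = A # D" using h by auto
      then have "foc (T @ D) B'" using fR.IH(2)[of "[]" D] by auto
      then show ?thesis using foc.fR[OF fR.hyps(1,2)] \<open>G1 = G\<close> by auto
    next
      case (Cons u us')
      then have "G1 = G @ A # us'" "D = us' @ D1" using h by auto
      then show ?thesis using fR.IH(1)[of G us'] fR_adm[OF _ fR.hyps(3)] by fastforce
    qed
  next
    assume h: "G1 @ us = G \<and> D1 = us @ A # D"
    then have "foc (us @ T @ D) B'" using fR.IH(2)[of us D] by auto
    then have "foc (G1 @ us @ T @ D) (Prod A' B')" using foc.fR[OF fR.hyps(1,2)] by blast
    then show ?thesis using h by auto
  qed
qed

lemma princ:
  assumes c1: "\<And>T G D B. foc T C1 \<Longrightarrow> foc (G @ C1 # D) B \<Longrightarrow> foc (G @ T @ D) B"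
    and c2: "\<And>T G D B. foc T C2 \<Longrightarrow> foc (G @ C2 # D) B \<Longrightarrow> foc (G @ T @ D) B"
  shows "foc T X \<Longrightarrow> X = Prod C1 C2 \<Longrightarrow> foc (C1 # C2 # D) B \<Longrightarrow> foc (T @ D) B"
proof (induction T X rule: foc.induct)
  case (fatm p)
  then show ?case by simp
next
  case (fL A B' D' C)
  then show ?case using foc.fL by fastforce
next
  case (fR G1 A' D1 B')
  then have "foc (G1 @ C2 # D) B" using c1[of G1 "[]" "C2 # D" B] by auto
  then have "foc (G1 @ D1 @ D) B" using c2[of D1 G1 D B] fR by auto
  then show ?case by simp
qed

lemma cut_adm: "foc T A \<Longrightarrow> foc (G @ A # D) B \<Longrightarrow> foc (G @ T @ D) B"
proof (induction A arbitrary: T G D B)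
  case (At p)
  then show ?case using cut_gen[of "At p" T] by blast
next
  case (Prod C1 C2)
  have pr: "foc (T @ D') B'" if "Prod C1 C2 = Prod C1' C2'" "foc (C1' # C2' # D') B'" for C1' C2' D' B'
    using princ[OF Prod.IH(1) Prod.IH(2) Prod.prems(1)] that by auto
  show ?case
  proof (rule cut_gen[of "Prod C1 C2" T])
    show "\<And>C1' C2' D B. Prod C1 C2 = Prod C1' C2' \<Longrightarrow> foc (C1' # C2' # D) B \<Longrightarrow> foc (T @ D) B"
      by (rule pr)
    show "foc T (Prod C1 C2)" by (rule Prod.prems(1))
    show "foc (G @ Prod C1 C2 # D) B" by (rule Prod.prems(2))
  qed simp
qed

lemma deriv_foc: "derivable G A \<Longrightarrow> foc G A"
  by (induction rule: derivable.induct) (auto intro: foc_id fL fR_adm cut_adm)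

theorem theorem1p17:
  fixes \<Gamma> :: "'a fma list" and A :: "'a fma"
  assumes "derivable \<Gamma> A"
  shows "\<exists>!d. focused_derivation_of d \<Gamma> A"
  using foc_ex[OF deriv_foc[OF assms]] uniq unfolding focused_derivation_of_def by metis

end
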